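(* Let $\beta>0$, let $F$ be symmetric, positive on $\Gamma_+$, homogeneous of degree 1, with $F^\beta(1,\dots,1)=1$ and $\partial F/\partial\lambda_i>0$, and let $G:\mathbb{S}^n\times(0,\infty)\times(0,\infty)\to(0,\infty)$. Assume that whenever $G(x,ms_1,ms_2)\ge G(x,s_1,s_2)m^{-\beta}$ holds for some $x\in\mathbb{S}^n$ and positive $s_1,s_2,m$, necessarily $m\le1$. Then for any constant $c$, the equation $$G\big(x,u,\sqrt{u^2+|Du|^2}\big)F^\beta(D^2u+uI)=c\quad\text{on }\mathbb{S}^n$$ has at most one positive, smooth, uniformly convex solution $u$.
   Context: $\Gamma_+=\{\lambda\in\mathbb{R}^n:\lambda_i>0\}$; $F$ is applied to symmetric matrices via eigenvalues. $D$ is covariant differentiation on the round $\mathbb{S}^n$, $I$ the identity; uniformly convex means $D^2u+uI>0$. Note $\sqrt{u^2+|Du|^2}$ is the radial function $\rho$ of the convex body with support function $u$. *)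

theory Defs
  imports "HOL-Analysis.Analysis"
begin

definition partial_d :: "'m::finite \<Rightarrow> (real^'m \<Rightarrow> real) \<Rightarrow> real^'m \<Rightarrow> real" where
  "partial_d i f y = deriv (\<lambda>t. f (y + t *\<^sub>R axis i 1)) 0"

definition iter_partial :: "'m::finite list \<Rightarrow> (real^'m \<Rightarrow> real) \<Rightarrow> real^'m \<Rightarrow> real" where
  "iter_partial is f = foldr partial_d is f"

definition smooth_on :: "(real^'m::finite) set \<Rightarrow> (real^'m \<Rightarrow> real) \<Rightarrow> bool" where
  "smooth_on S f \<longleftrightarrow> (\<forall>is. iter_partial is f differentiable_on S)"

definition grad :: "(real^'m::finite \<Rightarrow> real) \<Rightarrow> real^'m \<Rightarrow> real^'m" where
  "grad f y = (\<chi> i. partial_d i f y)"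

definition hess :: "(real^'m::finite \<Rightarrow> real) \<Rightarrow> real^'m \<Rightarrow> real^'m^'m" where
  "hess f y = (\<chi> i j. partial_d j (partial_d i f) y)"

abbreviation unit_sphere :: "(real^'m::finite) set" where
  "unit_sphere \<equiv> sphere 0 1"

definition hom0_ext :: "(real^'m::finite \<Rightarrow> real) \<Rightarrow> real^'m \<Rightarrow> real" where
  "hom0_ext u y = u (y /\<^sub>R norm y)"

text \<open>Covariant gradient Du(x) on the sphere (a tangent vector at x): the Euclidean gradient
  of the degree-0 homogeneous extension.\<close>
definition sph_grad :: "(real^'m::finite \<Rightarrow> real) \<Rightarrow> real^'m \<Rightarrow> real^'m" where
  "sph_grad u x = grad (hom0_ext u) x"

text \<open>Covariant Hessian D^2u(x)(v,w) for tangent vectors v,w at x. For any extension f one has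
  D^2u(v,w) = Hess f(v,w) - (grad f . x)(v . w); for the degree-0 extension grad f . x = 0.\<close>
definition sph_hess :: "(real^'m::finite \<Rightarrow> real) \<Rightarrow> real^'m \<Rightarrow> real^'m \<Rightarrow> real^'m \<Rightarrow> real" where
  "sph_hess u x v w = v \<bullet> (hess (hom0_ext u) x *v w)"

definition tangent_frame :: "real^'m::finite \<Rightarrow> ('n::finite \<Rightarrow> real^'m) \<Rightarrow> bool" where
  "tangent_frame x e \<longleftrightarrow> (\<forall>i. e i \<bullet> x = 0) \<and>
     (\<forall>i j. e i \<bullet> e j = (if i = j then 1 else 0))"

definition W_matrix :: "(real^'m::finite \<Rightarrow> real) \<Rightarrow> real^'m \<Rightarrow> ('n::finite \<Rightarrow> real^'m) \<Rightarrow> real^'n^'n" where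
  "W_matrix u x e = (\<chi> i j. sph_hess u x (e i) (e j) + (if i = j then u x else 0))"

definition uniformly_convex :: "(real^'m::finite \<Rightarrow> real) \<Rightarrow> bool" where
  "uniformly_convex u \<longleftrightarrow> (\<forall>x\<in>unit_sphere. \<forall>v. v \<bullet> x = 0 \<and> v \<noteq> 0 \<longrightarrow>
      sph_hess u x v v + u x * (v \<bullet> v) > 0)"

definition diag_mat :: "real^'n::finite \<Rightarrow> real^'n^'n" where
  "diag_mat l = (\<chi> i j. if i = j then l $ i else 0)"

definition eigvals :: "real^'n::finite^'n \<Rightarrow> real^'n \<Rightarrow> bool" where
  "eigvals A l \<longleftrightarrow> (\<exists>Q. orthogonal_matrix Q \<and> A = Q ** diag_mat l ** transpose Q)"

definition apply_eig :: "(real^'n::finite \<Rightarrow> real) \<Rightarrow> real^'n^'n \<Rightarrow> real" where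
  "apply_eig F A = F (SOME l. eigvals A l)"

definition Gamma_plus :: "(real^'n::finite) set" where
  "Gamma_plus = {l. \<forall>i. l $ i > 0}"

end

theory Submission
  imports Defs
begin


lemma dir_deriv:
  fixes f :: "real^'m::finite \<Rightarrow> real"
  assumes "(f has_derivative f') (at (y + t0 *\<^sub>R v))"
  shows "((\<lambda>t. f (y + t *\<^sub>R v)) has_real_derivative f' v) (at t0)"
proof -
  have l: "linear f'" using assms has_derivative_linear by blast
  have "((\<lambda>t. y + t *\<^sub>R v) has_derivative (\<lambda>h. h *\<^sub>R v)) (at t0)"
    by (auto intro!: derivative_eq_intros)
  from has_derivative_compose[OF this assms]
  have "((\<lambda>t. f (y + t *\<^sub>R v)) has_derivative (\<lambda>h. f' (h *\<^sub>R v))) (at t0)" by simp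
  moreover have "(\<lambda>h. f' (h *\<^sub>R v)) = (*) (f' v)"
    using linear_scale[OF l] by (auto simp: fun_eq_iff linear_cmul[OF l])
  ultimately show ?thesis by (simp add: has_field_derivative_def)
qed

lemma partial_d_eq:
  fixes f :: "real^'m::finite \<Rightarrow> real"
  assumes "(f has_derivative f') (at y)"
  shows "partial_d i f y = f' (axis i 1)"
proof -
  have "((\<lambda>t. f (y + t *\<^sub>R axis i 1)) has_real_derivative f' (axis i 1)) (at 0)"
    by (rule dir_deriv) (use assms in simp)
  then show ?thesis unfolding partial_d_def by (rule DERIV_imp_deriv)
qed

lemma deriv_grad:
  fixes f :: "real^'m::finite \<Rightarrow> real"
  assumes "(f has_derivative f') (at y)"
  shows "f' v = grad f y \<bullet> v"
proof -
  have l: "linear f'" using assms has_derivative_linear by blast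
  have "f' v = f' (\<Sum>i\<in>UNIV. (v$i) *\<^sub>R axis i 1)"
    using basis_expansion[of v] by (simp add: scalar_mult_eq_scaleR)
  also have "\<dots> = (\<Sum>i\<in>UNIV. v$i * f' (axis i 1))"
    by (simp add: linear_sum[OF l] linear_cmul[OF l])
  also have "\<dots> = grad f y \<bullet> v"
    by (simp add: grad_def inner_vec_def partial_d_eq[OF assms] mult.commute)
  finally show ?thesis .
qed

lemma has_derivative_grad:
  fixes f :: "real^'m::finite \<Rightarrow> real"
  assumes "f differentiable (at y)"
  shows "(f has_derivative (\<lambda>v. grad f y \<bullet> v)) (at y)"
proof -
  obtain f' where d: "(f has_derivative f') (at y)" using assms differentiable_def by blast
  have "f' = (\<lambda>v. grad f y \<bullet> v)" using deriv_grad[OF d] by auto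
  with d show ?thesis by simp
qed

lemma dir_deriv_grad:
  fixes f :: "real^'m::finite \<Rightarrow> real"
  assumes "f differentiable (at (y + t0 *\<^sub>R v))"
  shows "((\<lambda>t. f (y + t *\<^sub>R v)) has_real_derivative (grad f (y + t0 *\<^sub>R v) \<bullet> v)) (at t0)"
  using dir_deriv[OF has_derivative_grad[OF assms]] .

lemma smooth_diff:
  assumes "smooth_on S f" "open S" "x \<in> S"
  shows "f differentiable (at x)" "partial_d i f differentiable (at x)"
        "partial_d j (partial_d i f) differentiable (at x)"
proof -
  have "iter_partial [] f differentiable_on S" "iter_partial [i] f differentiable_on S"
       "iter_partial [j,i] f differentiable_on S"
    using assms unfolding smooth_on_def by blast+
  then show "f differentiable (at x)" "partial_d i f differentiable (at x)"
        "partial_d j (partial_d i f) differentiable (at x)"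
    using assms by (auto simp: iter_partial_def differentiable_on_eq_differentiable_at)
qed



lemma schwarz_est:
  fixes f :: "real^'m::finite \<Rightarrow> real"
  assumes S: "open S" "x \<in> S" and fd: "\<And>y. y \<in> S \<Longrightarrow> f differentiable (at y)"
    and gd: "partial_d i f differentiable (at x)" and e: "e > 0"
  shows "\<exists>d>0. \<forall>h. 0 < h \<and> h < d \<longrightarrow>
     \<bar>(f (x + h *\<^sub>R axis j 1 + h *\<^sub>R axis i 1) - f (x + h *\<^sub>R axis i 1) - f (x + h *\<^sub>R axis j 1) + f x)
       - h\<^sup>2 * partial_d j (partial_d i f) x\<bar> \<le> 3 * e * h\<^sup>2"
proof -
  define g where "g = partial_d i f"
  define L where "L = (\<lambda>w. grad g x \<bullet> w)"
  have gL: "(g has_derivative L) (at x)" unfolding L_def g_def using has_derivative_grad[OF gd] .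
  have pj: "partial_d j g x = L (axis j 1)" using partial_d_eq[OF gL] .
  obtain d1 where d1: "d1 > 0" "\<And>y. norm (y - x) < d1 \<Longrightarrow> norm (g y - g x - L (y - x)) \<le> e * norm (y - x)"
    using gL e unfolding has_derivative_at_alt by blast
  obtain r where r: "r > 0" "ball x r \<subseteq> S" using S open_contains_ball by blast
  define d where "d = min d1 r / 2"
  have lin: "linear L" using has_derivative_linear[OF gL] .
  have Lsc: "L (c *\<^sub>R w) = c * L w" for c w using linear_cmul[OF lin] by simp
  have Ldiff: "L (a - b) = L a - L b" for a b using linear_diff[OF lin] .
  have "\<forall>h. 0 < h \<and> h < d \<longrightarrow>
     \<bar>(f (x + h *\<^sub>R axis j 1 + h *\<^sub>R axis i 1) - f (x + h *\<^sub>R axis i 1) - f (x + h *\<^sub>R axis j 1) + f x)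
       - h\<^sup>2 * partial_d j (partial_d i f) x\<bar> \<le> 3 * e * h\<^sup>2"
  proof (intro allI impI)
    fix h :: real assume h: "0 < h \<and> h < d"
    define ei :: "real^'m" where "ei = axis i 1"
    define ej :: "real^'m" where "ej = axis j 1"
    have nei: "norm ei = 1" "norm ej = 1" by (simp_all add: ei_def ej_def)
    define \<phi> where "\<phi> = (\<lambda>s. f ((x + h *\<^sub>R ej) + s *\<^sub>R ei) - f (x + s *\<^sub>R ei))"
    define \<phi>' where "\<phi>' = (\<lambda>s. g ((x + h *\<^sub>R ej) + s *\<^sub>R ei) - g (x + s *\<^sub>R ei))"
    have inS: "x + w \<in> S" if "norm w \<le> 2 * h" for w
    proof -
      have "norm w < r" using that h r unfolding d_def by auto
      then show ?thesis using r by (auto simp: dist_norm)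
    qed
    have nb: "norm (h *\<^sub>R ej + s *\<^sub>R ei) \<le> 2 * h" "norm (s *\<^sub>R ei) \<le> 2 * h" if "0 \<le> s" "s \<le> h" for s
    proof -
      have "norm (h *\<^sub>R ej + s *\<^sub>R ei) \<le> norm (h *\<^sub>R ej) + norm (s *\<^sub>R ei)" by (rule norm_triangle_ineq)
      also have "\<dots> = h + s" using nei that h by simp
      finally show "norm (h *\<^sub>R ej + s *\<^sub>R ei) \<le> 2 * h" using that by simp
      show "norm (s *\<^sub>R ei) \<le> 2 * h" using nei that h by simp
    qed
    have gdef: "grad f z \<bullet> ei = g z" if "f differentiable (at z)" for z
      using partial_d_eq[OF has_derivative_grad[OF that]] by (simp add: g_def ei_def)
    have der: "(\<phi> has_real_derivative \<phi>' s) (at s)" if "0 \<le> s" "s \<le> h" for s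
    proof -
      have a1: "f differentiable (at ((x + h *\<^sub>R ej) + s *\<^sub>R ei))"
        using fd inS[OF nb(1)[OF that]] by (simp add: add.assoc)
      have a2: "f differentiable (at (x + s *\<^sub>R ei))"
        using fd inS[OF nb(2)[OF that]] by simp
      show ?thesis unfolding \<phi>_def \<phi>'_def
        using DERIV_diff[OF dir_deriv_grad[OF a1] dir_deriv_grad[OF a2]] gdef[OF a1] gdef[OF a2] by simp
    qed
    obtain \<xi> where xi: "0 < \<xi>" "\<xi> < h" "\<phi> h - \<phi> 0 = (h - 0) * \<phi>' \<xi>"
      using MVT2[of 0 h \<phi> \<phi>'] der h by auto
    have Delta: "f (x + h *\<^sub>R axis j 1 + h *\<^sub>R axis i 1) - f (x + h *\<^sub>R axis i 1) - f (x + h *\<^sub>R axis j 1) + f x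
       = h * \<phi>' \<xi>" using xi(3) unfolding \<phi>_def ei_def ej_def by simp
    define w1 where "w1 = h *\<^sub>R ej + \<xi> *\<^sub>R ei"
    define w2 where "w2 = \<xi> *\<^sub>R ei"
    have nw1: "norm w1 \<le> 2 * h" "norm w2 \<le> h" using nb[of \<xi>] xi nei unfolding w1_def w2_def by auto
    have e1: "\<bar>g (x + w1) - g x - L w1\<bar> \<le> e * norm w1"
      using d1(2)[of "x + w1"] nw1 h unfolding d_def by auto
    have e2: "\<bar>g (x + w2) - g x - L w2\<bar> \<le> e * norm w2"
      using d1(2)[of "x + w2"] nw1 h xi unfolding d_def by auto
    have "L w1 - L w2 = h * L ej" unfolding w1_def w2_def by (simp add: linear_add[OF lin] Lsc)
    moreover have "\<phi>' \<xi> = g (x + w1) - g (x + w2)" unfolding \<phi>'_def w1_def w2_def by (simp add: add.assoc)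
    ultimately have "\<bar>\<phi>' \<xi> - h * L ej\<bar> \<le> e * norm w1 + e * norm w2" using e1 e2 by linarith
    also have "\<dots> \<le> e * (2*h) + e * h" using nw1 e by (intro add_mono mult_left_mono) auto
    finally have "\<bar>\<phi>' \<xi> - h * L ej\<bar> \<le> 3 * e * h" by simp
    then have "h * \<bar>\<phi>' \<xi> - h * L ej\<bar> \<le> h * (3 * e * h)" using h by (intro mult_left_mono) auto
    moreover have "\<bar>h * \<phi>' \<xi> - h\<^sup>2 * L ej\<bar> = h * \<bar>\<phi>' \<xi> - h * L ej\<bar>" using h
      by (simp add: power2_eq_square abs_mult right_diff_distrib[symmetric] mult.assoc)
    ultimately have "\<bar>h * \<phi>' \<xi> - h\<^sup>2 * L ej\<bar> \<le> 3 * e * h\<^sup>2"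
      by (simp add: power2_eq_square mult_ac)
    then show "\<bar>(f (x + h *\<^sub>R axis j 1 + h *\<^sub>R axis i 1) - f (x + h *\<^sub>R axis i 1) - f (x + h *\<^sub>R axis j 1) + f x)
       - h\<^sup>2 * partial_d j (partial_d i f) x\<bar> \<le> 3 * e * h\<^sup>2"
      using Delta pj by (simp add: g_def ej_def)
  qed
  moreover have "d > 0" using d1 r unfolding d_def by auto
  ultimately show ?thesis by blast
qed

lemma schwarz:
  fixes f :: "real^'m::finite \<Rightarrow> real"
  assumes S: "open S" "x \<in> S" and fd: "\<And>y. y \<in> S \<Longrightarrow> f differentiable (at y)"
    and gi: "partial_d i f differentiable (at x)" and gj: "partial_d j f differentiable (at x)"
  shows "partial_d j (partial_d i f) x = partial_d i (partial_d j f) x"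
proof -
  define A where "A = partial_d j (partial_d i f) x"
  define B where "B = partial_d i (partial_d j f) x"
  have "\<bar>A - B\<bar> \<le> 6 * e" if e: "e > 0" for e
  proof -
    obtain d1 where d1: "d1 > 0" "\<forall>h. 0 < h \<and> h < d1 \<longrightarrow>
     \<bar>(f (x + h *\<^sub>R axis j 1 + h *\<^sub>R axis i 1) - f (x + h *\<^sub>R axis i 1) - f (x + h *\<^sub>R axis j 1) + f x)
       - h\<^sup>2 * A\<bar> \<le> 3 * e * h\<^sup>2"
      using schwarz_est[OF S fd gi e, of j] unfolding A_def by blast
    obtain d2 where d2: "d2 > 0" "\<forall>h. 0 < h \<and> h < d2 \<longrightarrow>
     \<bar>(f (x + h *\<^sub>R axis i 1 + h *\<^sub>R axis j 1) - f (x + h *\<^sub>R axis j 1) - f (x + h *\<^sub>R axis i 1) + f x)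
       - h\<^sup>2 * B\<bar> \<le> 3 * e * h\<^sup>2"
      using schwarz_est[OF S fd gj e, of i] unfolding B_def by blast
    define h where "h = min d1 d2 / 2"
    have h: "0 < h" "h < d1" "h < d2" using d1 d2 unfolding h_def by auto
    have c: "x + h *\<^sub>R axis i 1 + h *\<^sub>R axis j 1 = x + h *\<^sub>R axis j 1 + h *\<^sub>R axis i 1"
      by (simp add: algebra_simps)
    have "\<bar>h\<^sup>2 * A - h\<^sup>2 * B\<bar> \<le> 6 * e * h\<^sup>2"
      using d1(2)[rule_format, of h] d2(2)[rule_format, of h] h c by (simp add: abs_le_iff)
    moreover have "\<bar>h\<^sup>2 * A - h\<^sup>2 * B\<bar> = h\<^sup>2 * \<bar>A - B\<bar>"
      by (simp add: abs_mult right_diff_distrib[symmetric])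
    ultimately have "h\<^sup>2 * \<bar>A - B\<bar> \<le> h\<^sup>2 * (6 * e)" by (simp add: mult_ac)
    then show ?thesis using h by (simp add: mult_le_cancel_left)
  qed
  then have "A = B"
  proof (rule_tac ccontr)
    assume H: "\<And>e. e > 0 \<Longrightarrow> \<bar>A - B\<bar> \<le> 6 * e" and ne: "A \<noteq> B"
    have "\<bar>A - B\<bar> \<le> 6 * (\<bar>A - B\<bar> / 12)" using H[of "\<bar>A - B\<bar> / 12"] ne by auto
    then show False using ne by auto
  qed
  then show ?thesis unfolding A_def B_def .
qed



lemma hess_quad:
  fixes f :: "real^'m::finite \<Rightarrow> real"
  shows "v \<bullet> (hess f x *v v) = (\<Sum>i\<in>UNIV. (grad (partial_d i f) x \<bullet> v) * v$i)"
  by (simp add: hess_def grad_def inner_vec_def matrix_vector_mult_def mult.commute)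

lemma second_order_max:
  fixes f1 f2 :: "real^'m::finite \<Rightarrow> real"
  assumes S: "open S" "x \<in> S"
    and d1: "\<And>y. y \<in> S \<Longrightarrow> f1 differentiable (at y)"
    and d2: "\<And>y. y \<in> S \<Longrightarrow> f2 differentiable (at y)"
    and p1: "\<And>i. partial_d i f1 differentiable (at x)"
    and p2: "\<And>i. partial_d i f2 differentiable (at x)"
    and le: "\<And>y. y \<in> S \<Longrightarrow> f1 y \<le> M * f2 y" and eq: "f1 x = M * f2 x"
  shows "grad f1 x = M *\<^sub>R grad f2 x"
    and "v \<bullet> (hess f1 x *v v) \<le> M * (v \<bullet> (hess f2 x *v v))"
proof -
  obtain r where r: "r > 0" "ball x r \<subseteq> S" using S open_contains_ball by blast
  have inS: "x + t *\<^sub>R w \<in> S" if "\<bar>t\<bar> < r / (norm w + 1)" for t w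
  proof -
    have "norm (t *\<^sub>R w) = \<bar>t\<bar> * norm w" by simp
    also have "\<dots> \<le> \<bar>t\<bar> * (norm w + 1)" by (simp add: mult_left_mono)
    also have "\<dots> < r"
    proof -
      have "norm w + 1 > 0" by (simp add: add_nonneg_pos)
      then show ?thesis using that by (simp add: pos_less_divide_eq)
    qed
    finally show ?thesis using r by (auto simp: dist_norm)
  qed
  have dpos: "r / (norm w + 1) > 0" for w :: "real^'m" using r by (intro divide_pos_pos) (auto intro: add_nonneg_pos)
  define g where "g = (\<lambda>w t. f1 (x + t *\<^sub>R w) - M * f2 (x + t *\<^sub>R w))"
  define G where "G = (\<lambda>w t. (grad f1 (x + t *\<^sub>R w) - M *\<^sub>R grad f2 (x + t *\<^sub>R w)) \<bullet> w)"
  have gder: "(g w has_real_derivative G w t) (at t)" if "\<bar>t\<bar> < r / (norm w + 1)" for w t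
  proof -
    have a1: "f1 differentiable (at (x + t *\<^sub>R w))" using d1 inS[OF that] .
    have a2: "f2 differentiable (at (x + t *\<^sub>R w))" using d2 inS[OF that] .
    show ?thesis unfolding g_def G_def
      using DERIV_diff[OF dir_deriv_grad[OF a1] DERIV_cmult[OF dir_deriv_grad[OF a2], of M]]
      by (simp add: inner_diff_left)
  qed
  have gmax: "g w t \<le> g w 0" if "\<bar>t\<bar> < r / (norm w + 1)" for w t
    using le[OF inS[OF that]] eq unfolding g_def by simp
  have G0: "G w 0 = 0" for w
    using DERIV_local_max[OF gder[of 0 w] dpos[of w]] gmax[of _ w] dpos[of w]
    by (simp add: abs_minus_commute)
  have "(grad f1 x - M *\<^sub>R grad f2 x) \<bullet> (grad f1 x - M *\<^sub>R grad f2 x) = 0"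
    using G0[of "grad f1 x - M *\<^sub>R grad f2 x"] unfolding G_def by simp
  then show "grad f1 x = M *\<^sub>R grad f2 x" by simp
  define H where "H = (\<lambda>t. \<Sum>i\<in>UNIV. (partial_d i f1 (x + t *\<^sub>R v) - M * partial_d i f2 (x + t *\<^sub>R v)) * v$i)"
  have HG: "H t = G v t" for t
    by (simp add: H_def G_def inner_vec_def grad_def algebra_simps sum_subtractf sum_distrib_left)
  have Hd: "(H has_real_derivative
      (\<Sum>i\<in>UNIV. (grad (partial_d i f1) x \<bullet> v - M * (grad (partial_d i f2) x \<bullet> v)) * v$i)) (at 0)"
    unfolding H_def
  proof (rule DERIV_sum)
    fix i
    have a1: "partial_d i f1 differentiable (at (x + 0 *\<^sub>R v))" using p1 by simp
    have a2: "partial_d i f2 differentiable (at (x + 0 *\<^sub>R v))" using p2 by simp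
    have "((\<lambda>t. partial_d i f1 (x + t *\<^sub>R v) - M * partial_d i f2 (x + t *\<^sub>R v)) has_real_derivative
          grad (partial_d i f1) x \<bullet> v - M * (grad (partial_d i f2) x \<bullet> v)) (at 0)"
      using DERIV_diff[OF dir_deriv_grad[OF a1] DERIV_cmult[OF dir_deriv_grad[OF a2], of M]] by simp
    from DERIV_cmult_right[OF this, of "v$i"]
    show "((\<lambda>t. (partial_d i f1 (x + t *\<^sub>R v) - M * partial_d i f2 (x + t *\<^sub>R v)) * v$i) has_real_derivative
          (grad (partial_d i f1) x \<bullet> v - M * (grad (partial_d i f2) x \<bullet> v)) * v$i) (at 0)" .
  qed
  have Qeq: "(\<Sum>i\<in>UNIV. (grad (partial_d i f1) x \<bullet> v - M * (grad (partial_d i f2) x \<bullet> v)) * v$i)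
     = v \<bullet> (hess f1 x *v v) - M * (v \<bullet> (hess f2 x *v v))"
    by (simp add: hess_quad left_diff_distrib sum_subtractf sum_distrib_left mult.assoc)
  show "v \<bullet> (hess f1 x *v v) \<le> M * (v \<bullet> (hess f2 x *v v))"
  proof (rule ccontr)
    assume "\<not> ?thesis"
    then have pos: "0 < v \<bullet> (hess f1 x *v v) - M * (v \<bullet> (hess f2 x *v v))" by simp
    obtain d' where d': "d' > 0" "\<forall>h>0. h < d' \<longrightarrow> H 0 < H (0 + h)"
      using DERIV_pos_inc_right[OF Hd] pos Qeq by auto
    obtain R where R: "R = r / (norm v + 1)" "R > 0" using dpos[of v] by blast
    define h where "h = min d' R / 2"
    have h0: "0 < h" "h < d'" "h < R" using d'(1) R(2) unfolding h_def by auto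
    then have h: "0 < h" "h < d'" "h < r / (norm v + 1)" using R(1) by auto
    have "\<forall>s. 0 \<le> s \<and> s \<le> h \<longrightarrow> (g v has_real_derivative G v s) (at s)"
      using h by (intro allI impI gder) auto
    then obtain z where z: "0 < z" "z < h" "g v h - g v 0 = (h - 0) * G v z"
      using MVT2[of 0 h "g v" "G v"] h by auto
    have "G v z > 0" using d'(2)[rule_format, of z] z h HG G0 by auto
    then have "h * G v z > 0" using h by simp
    then have "g v h > g v 0" using z(3) by simp
    moreover have "g v h \<le> g v 0" using gmax[of h v] h by simp
    ultimately show False by simp
  qed
qed



lemma exists_orth:
  fixes S :: "(real^'n::finite) set"
  assumes "finite S" "card S < CARD('n)"
  shows "\<exists>x. x \<noteq> 0 \<and> (\<forall>s\<in>S. x \<bullet> s = 0)"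
proof -
  have "dim S < DIM(real^'n)" using real_vector.dim_le_card'[OF assms(1)] assms(2) by simp
  then obtain x where "x \<noteq> 0" "\<And>y. y \<in> span S \<Longrightarrow> orthogonal x y"
    using orthogonal_to_subspace_exists by metis
  then show ?thesis by (auto simp: orthogonal_def intro: span_base)
qed

lemma adj_mat: "(transpose A *v x) \<bullet> (y::real^'n::finite) = x \<bullet> (A *v y)"
  by (simp add: dot_lmul_matrix)

lemma quad_ineq_zero:
  fixes a b :: real
  assumes "a \<ge> 0" "\<And>t. 2 * t * a + t\<^sup>2 * b \<le> 0"
  shows "a = 0"
proof (rule ccontr)
  assume "a \<noteq> 0"
  then have a: "a > 0" using assms by simp
  define t where "t = a / (\<bar>b\<bar> + 1)"
  have t: "t > 0" using a by (simp add: t_def add_nonneg_pos)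
  have "t * (2 * a + t * b) \<le> 0" using assms(2)[of t] by (simp add: power2_eq_square algebra_simps)
  then have "2 * a + t * b \<le> 0" using t by (simp add: mult_le_0_iff)
  moreover have "t * \<bar>b\<bar> \<le> a"
  proof -
    have "t * \<bar>b\<bar> = a * (\<bar>b\<bar> / (\<bar>b\<bar> + 1))" by (simp add: t_def)
    also have "\<dots> \<le> a * 1" using a by (intro mult_left_mono) auto
    finally show ?thesis by simp
  qed
  moreover have "t * (- \<bar>b\<bar>) \<le> t * b" using t by (intro mult_left_mono) auto
  ultimately show False using a by linarith
qed

lemma eigvec_extend:
  fixes A :: "real^'n::finite^'n" and S :: "(real^'n) set"
  assumes sym: "transpose A = A" and fin: "finite S" and card: "card S < CARD('n)"
    and inv: "\<And>w s. s \<in> S \<Longrightarrow> w \<bullet> s = 0 \<Longrightarrow> (A *v w) \<bullet> s = 0"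
  shows "\<exists>v. norm v = 1 \<and> (\<forall>s\<in>S. v \<bullet> s = 0) \<and> A *v v = (v \<bullet> (A *v v)) *\<^sub>R v"
proof -
  define T where "T = {w. \<forall>s\<in>S. w \<bullet> s = 0} \<inter> sphere 0 1"
  define q where "q = (\<lambda>w::real^'n. w \<bullet> (A *v w))"
  have "closed {w::real^'n. \<forall>s\<in>S. w \<bullet> s = 0}"
    by (simp add: Collect_ball_eq closed_INT closed_Collect_eq continuous_on_inner continuous_on_const continuous_on_id)
  then have cT: "compact T" unfolding T_def by (intro closed_Int_compact) (auto simp: compact_sphere)
  obtain x where x: "x \<noteq> 0" "\<forall>s\<in>S. x \<bullet> s = 0" using exists_orth[OF fin card] by blast
  have "x /\<^sub>R norm x \<in> T" using x unfolding T_def by (auto simp: inner_commute)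
  then have neT: "T \<noteq> {}" by blast
  have cq: "continuous_on T q" unfolding q_def
    by (intro continuous_intros linear_continuous_on matrix_vector_mul_bounded_linear)
  obtain v where v: "v \<in> T" "\<forall>y\<in>T. q y \<le> q v" using continuous_attains_sup[OF cT neT cq] by blast
  define \<mu> where "\<mu> = q v"
  have vS: "\<forall>s\<in>S. v \<bullet> s = 0" and nv: "norm v = 1" using v(1) unfolding T_def by auto
  have vv: "v \<bullet> v = 1" using nv by (simp add: norm_eq_1)
  have bound: "q w \<le> \<mu> * (w \<bullet> w)" if w: "\<forall>s\<in>S. w \<bullet> s = 0" for w
  proof (cases "w = 0")
    case True then show ?thesis by (simp add: q_def)
  next
    case False
    have "w /\<^sub>R norm w \<in> T" using w False unfolding T_def by (auto simp: inner_commute)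
    then have "q (w /\<^sub>R norm w) \<le> \<mu>" using v(2) unfolding \<mu>_def by blast
    moreover have "q (w /\<^sub>R norm w) = q w / (norm w)\<^sup>2"
      unfolding q_def by (simp add: matrix_vector_mult_scaleR power2_eq_square divide_inverse inverse_mult_distrib mult_ac)
    ultimately have "q w \<le> \<mu> * (norm w)\<^sup>2" using False by (simp add: divide_le_eq)
    then show ?thesis by (simp add: power2_norm_eq_inner)
  qed
  have symq: "a \<bullet> (A *v b) = b \<bullet> (A *v a)" for a b
    using adj_mat[of A b a] sym by (simp add: inner_commute)
  define w where "w = A *v v - \<mu> *\<^sub>R v"
  have wS: "\<forall>s\<in>S. w \<bullet> s = 0" using vS inv unfolding w_def by (simp add: inner_diff_left)
  have wv: "w \<bullet> v = 0" unfolding w_def \<mu>_def q_def using vv by (simp add: inner_diff_left inner_diff_right inner_commute)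
  have p: "w \<bullet> (A *v v) = w \<bullet> w"
  proof -
    have "w \<bullet> (A *v v) = w \<bullet> (w + \<mu> *\<^sub>R v)" unfolding w_def by simp
    also have "\<dots> = w \<bullet> w" using wv by (simp add: inner_add_right)
    finally show ?thesis .
  qed
  have "2 * t * (w \<bullet> w) + t\<^sup>2 * (q w - \<mu> * (w \<bullet> w)) \<le> 0" for t
  proof -
    have S': "\<forall>s\<in>S. (v + t *\<^sub>R w) \<bullet> s = 0" using vS wS by (simp add: inner_add_left)
    have "q (v + t *\<^sub>R w) = \<mu> + 2 * t * (w \<bullet> (A *v v)) + t\<^sup>2 * q w"
      unfolding q_def \<mu>_def using symq[of v w]
      by (simp add: matrix_vector_right_distrib matrix_vector_mult_scaleR inner_add_left inner_add_right
          power2_eq_square algebra_simps)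
    moreover have "(v + t *\<^sub>R w) \<bullet> (v + t *\<^sub>R w) = 1 + t\<^sup>2 * (w \<bullet> w)"
      using vv wv by (simp add: inner_add_left inner_add_right inner_commute power2_eq_square)
    ultimately show ?thesis using bound[OF S'] p by (simp add: algebra_simps)
  qed
  then have "w \<bullet> w = 0" by (intro quad_ineq_zero) auto
  then have "w = 0" by simp
  then have "A *v v = (v \<bullet> (A *v v)) *\<^sub>R v" unfolding w_def \<mu>_def q_def by simp
  then show ?thesis using nv vS by blast
qed



lemma eig_sets:
  fixes A :: "real^'n::finite^'n"
  assumes sym: "transpose A = A"
  shows "k \<le> CARD('n) \<Longrightarrow> \<exists>S. finite S \<and> card S = k \<and>
     (\<forall>s\<in>S. norm s = 1 \<and> A *v s = (s \<bullet> (A *v s)) *\<^sub>R s) \<and> (\<forall>s\<in>S. \<forall>t\<in>S. s \<noteq> t \<longrightarrow> s \<bullet> t = 0)"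
proof (induction k)
  case 0
  then show ?case by (rule_tac x="{}" in exI) simp
next
  case (Suc k)
  have "k \<le> CARD('n)" using Suc.prems by simp
  then obtain S where S: "finite S" "card S = k" "\<forall>s\<in>S. norm s = 1 \<and> A *v s = (s \<bullet> (A *v s)) *\<^sub>R s"
    "\<forall>s\<in>S. \<forall>t\<in>S. s \<noteq> t \<longrightarrow> s \<bullet> t = 0" using Suc.IH by blast
  have inv: "(A *v w) \<bullet> s = 0" if "s \<in> S" "w \<bullet> s = 0" for w s
  proof -
    have "(A *v w) \<bullet> s = w \<bullet> (A *v s)" using adj_mat[of A w s] sym by simp
    also have "\<dots> = w \<bullet> ((s \<bullet> (A *v s)) *\<^sub>R s)" using S(3) that(1) by metis
    also have "\<dots> = 0" using that(2) by simp
    finally show ?thesis .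
  qed
  obtain v where v: "norm v = 1" "\<forall>s\<in>S. v \<bullet> s = 0" "A *v v = (v \<bullet> (A *v v)) *\<^sub>R v"
  proof -
    have "card S < CARD('n)" using S(2) Suc.prems by simp
    then show ?thesis using eigvec_extend[OF sym S(1) _ inv] that by blast
  qed
  have vS: "v \<notin> S" using v(1,2) by (metis inner_eq_zero_iff norm_zero zero_neq_one)
  show ?case
  proof (rule exI[of _ "insert v S"], intro conjI)
    show "finite (insert v S)" using S(1) by simp
    show "card (insert v S) = Suc k" using S(1,2) vS by simp
    show "\<forall>s\<in>insert v S. norm s = 1 \<and> A *v s = (s \<bullet> (A *v s)) *\<^sub>R s" using S(3) v(1,3) by blast
    show "\<forall>s\<in>insert v S. \<forall>t\<in>insert v S. s \<noteq> t \<longrightarrow> s \<bullet> t = 0"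
      using S(4) v(2) by (metis inner_commute insert_iff)
  qed
qed

lemma spectral:
  fixes A :: "real^'n::finite^'n"
  assumes sym: "transpose A = A"
  shows "\<exists>l. eigvals A l"
proof -
  obtain S where S: "finite S" "card S = CARD('n)" "\<forall>s\<in>S. norm s = 1 \<and> A *v s = (s \<bullet> (A *v s)) *\<^sub>R s"
    "\<forall>s\<in>S. \<forall>t\<in>S. s \<noteq> t \<longrightarrow> s \<bullet> t = 0" using eig_sets[OF sym, of "CARD('n)"] by blast
  obtain \<beta> :: "'n \<Rightarrow> real^'n" where b: "bij_betw \<beta> UNIV S"
  proof -
    have "\<exists>f. bij_betw f (UNIV::'n set) S" using S(1,2) by (simp add: bij_betw_iff_card)
    then show ?thesis using that by blast
  qed
  have bS: "\<beta> c \<in> S" for c using b by (auto simp: bij_betw_def)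
  have binj: "\<beta> i = \<beta> j \<Longrightarrow> i = j" for i j using b by (auto simp: bij_betw_def inj_on_def)
  define Q :: "real^'n^'n" where "Q = (\<chi> r c. \<beta> c $ r)"
  define l :: "real^'n" where "l = (\<chi> c. \<beta> c \<bullet> (A *v \<beta> c))"
  have orth: "\<beta> i \<bullet> \<beta> j = (if i = j then 1 else 0)" for i j
  proof (cases "i = j")
    case True
    have "norm (\<beta> i) = 1" using S(3) bS[of i] by blast
    then show ?thesis using True by (simp add: norm_eq_1)
  next
    case False then show ?thesis using S(4) bS binj by metis
  qed
  have QtQ: "transpose Q ** Q = mat 1"
    by (simp add: vec_eq_iff matrix_matrix_mult_def transpose_def Q_def mat_def orth[symmetric] inner_vec_def)
  then have oQ: "orthogonal_matrix Q" by (simp add: orthogonal_matrix)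
  then have QQt: "Q ** transpose Q = mat 1" by (simp add: orthogonal_matrix_def)
  have eig: "A *v \<beta> c = (l $ c) *\<^sub>R \<beta> c" for c
  proof -
    have "l $ c = \<beta> c \<bullet> (A *v \<beta> c)" by (simp add: l_def)
    moreover have "A *v \<beta> c = (\<beta> c \<bullet> (A *v \<beta> c)) *\<^sub>R \<beta> c" using S(3) bS[of c] by blast
    ultimately show ?thesis by metis
  qed
  have AQ: "A ** Q = Q ** diag_mat l"
  proof -
    have "(A ** Q) $ r $ c = (Q ** diag_mat l) $ r $ c" for r c
    proof -
      have "(A ** Q) $ r $ c = (A *v \<beta> c) $ r"
        by (simp add: matrix_matrix_mult_def matrix_vector_mult_def Q_def)
      also have "\<dots> = l $ c * \<beta> c $ r" using eig[of c] by simp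
      also have "\<dots> = (Q ** diag_mat l) $ r $ c"
        by (simp add: matrix_matrix_mult_def diag_mat_def Q_def if_distrib cong: if_cong)
      finally show ?thesis .
    qed
    then show ?thesis by (simp add: vec_eq_iff)
  qed
  have "A = A ** (Q ** transpose Q)" using QQt by simp
  also have "\<dots> = (A ** Q) ** transpose Q" by (simp only: matrix_mul_assoc)
  also have "\<dots> = Q ** diag_mat l ** transpose Q" by (simp only: AQ)
  finally show ?thesis unfolding eigvals_def using oQ by blast
qed



lemma sum_if_mult: fixes i :: "'n::finite" shows "(\<Sum>j\<in>UNIV. (if i = j then c else 0) * (y j::real)) = c * y i"
proof -
  have "(\<Sum>j\<in>UNIV. (if i = j then c else 0) * y j) = (\<Sum>j\<in>UNIV. if i = j then c * y j else 0)"
    by (rule sum.cong) auto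
  also have "\<dots> = c * y i" by (rule trans[OF sum.delta']) simp_all
  finally show ?thesis .
qed

lemma diag_mult: "diag_mat a *v y = (\<chi> i. a$i * y$i)"
  by (simp add: vec_eq_iff diag_mat_def matrix_vector_mult_def sum_if_mult)

lemma quad_diag:
  fixes P :: "real^'n::finite^'n"
  assumes "orthogonal_matrix P" "A = P ** diag_mat a ** transpose P"
  shows "x \<bullet> (A *v x) = (\<Sum>i\<in>UNIV. a$i * ((transpose P *v x)$i)\<^sup>2)"
    and "(\<Sum>i\<in>UNIV. ((transpose P *v x)$i)\<^sup>2) = x \<bullet> x"
proof -
  define y where "y = transpose P *v x"
  have "A *v x = P *v (diag_mat a *v y)" unfolding y_def assms(2) by (simp only: matrix_vector_mul_assoc matrix_mul_assoc)
  then have "x \<bullet> (A *v x) = y \<bullet> (diag_mat a *v y)"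
    using adj_mat[of P x "diag_mat a *v y"] unfolding y_def by simp
  also have "\<dots> = (\<Sum>i\<in>UNIV. a$i * (y$i)\<^sup>2)"
    by (simp add: inner_vec_def diag_mult power2_eq_square mult_ac)
  finally show "x \<bullet> (A *v x) = (\<Sum>i\<in>UNIV. a$i * ((transpose P *v x)$i)\<^sup>2)" unfolding y_def .
  have "y \<bullet> y = x \<bullet> (P *v y)" using adj_mat[of P x y] unfolding y_def by simp
  also have "\<dots> = x \<bullet> x"
  proof -
    have PPt: "P ** transpose P = mat 1" using assms(1) by (simp add: orthogonal_matrix_def)
    have "P *v (transpose P *v x) = x" by (simp only: matrix_vector_mul_assoc PPt matrix_vector_mul_lid)
    then show ?thesis unfolding y_def by simp
  qed
  finally show "(\<Sum>i\<in>UNIV. ((transpose P *v x)$i)\<^sup>2) = x \<bullet> x"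
    unfolding y_def[symmetric] by (simp add: inner_vec_def power2_eq_square)
qed

lemma tP_col: "(transpose P *v x) $ i = column i P \<bullet> (x::real^'n::finite)"
  by (simp add: matrix_vector_mult_def transpose_def column_def inner_vec_def mult.commute)

lemma weyl_count:
  fixes A B P Q :: "real^'n::finite^'n"
  assumes P: "orthogonal_matrix P" "A = P ** diag_mat a ** transpose P"
    and Q: "orthogonal_matrix Q" "B = Q ** diag_mat b ** transpose Q"
    and le: "\<And>x. x \<bullet> (A *v x) \<le> x \<bullet> (B *v x)"
  shows "card {i. a$i \<ge> t} \<le> card {j. b$j \<ge> t}"
proof (rule ccontr)
  define I where "I = {i. a$i \<ge> t}"
  define J where "J = {j. b$j \<ge> t}"
  assume "\<not> card {i. a$i \<ge> t} \<le> card {j. b$j \<ge> t}"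
  then have IJ: "card J < card I" unfolding I_def J_def by simp
  define C where "C = (\<lambda>i. column i P) ` (- I) \<union> (\<lambda>j. column j Q) ` J"
  have "card C \<le> card ((\<lambda>i. column i P) ` (- I)) + card ((\<lambda>j. column j Q) ` J)"
    unfolding C_def by (rule card_Un_le)
  also have "\<dots> \<le> card (- I) + card J" by (intro add_mono card_image_le) auto
  also have "card (- I) = CARD('n) - card I" by (simp add: Compl_eq_Diff_UNIV card_Diff_subset)
  finally have "card C < CARD('n)" using IJ card_mono[of UNIV I] by auto
  then obtain x :: "real^'n" where x: "x \<noteq> 0" "\<forall>c\<in>C. x \<bullet> c = 0"
    using exists_orth[of C] unfolding C_def by auto
  define y where "y = transpose P *v x"
  define z where "z = transpose Q *v x"
  have y0: "y $ i = 0" if "i \<notin> I" for i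
    using x(2) that unfolding y_def tP_col C_def by (auto simp: inner_commute)
  have z0: "z $ j = 0" if "j \<in> J" for j
    using x(2) that unfolding z_def tP_col C_def by (auto simp: inner_commute)
  have "t * (x \<bullet> x) = (\<Sum>i\<in>UNIV. t * (y$i)\<^sup>2)"
    using quad_diag(2)[OF P, of x] unfolding y_def by (simp only: sum_distrib_left[symmetric])
  also have "\<dots> \<le> (\<Sum>i\<in>UNIV. a$i * (y$i)\<^sup>2)"
  proof (rule sum_mono)
    fix i
    show "t * (y$i)\<^sup>2 \<le> a$i * (y$i)\<^sup>2"
      using y0[of i] by (cases "i \<in> I") (auto simp: I_def intro: mult_right_mono)
  qed
  also have "\<dots> = x \<bullet> (A *v x)" using quad_diag(1)[OF P, of x] unfolding y_def by simp
  also have "\<dots> \<le> x \<bullet> (B *v x)" by (rule le)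
  also have "\<dots> = (\<Sum>j\<in>UNIV. b$j * (z$j)\<^sup>2)" using quad_diag(1)[OF Q, of x] unfolding z_def by simp
  finally have ineq: "t * (x \<bullet> x) \<le> (\<Sum>j\<in>UNIV. b$j * (z$j)\<^sup>2)" .
  have zz: "(\<Sum>j\<in>UNIV. (z$j)\<^sup>2) = x \<bullet> x" using quad_diag(2)[OF Q, of x] unfolding z_def by simp
  have "z \<noteq> 0"
  proof
    assume "z = 0"
    then have "x \<bullet> x = 0" using zz by simp
    then show False using x(1) by simp
  qed
  then obtain j0 where j0: "z $ j0 \<noteq> 0" by (auto simp: vec_eq_iff)
  have "0 < (\<Sum>j\<in>UNIV. (t - b$j) * (z$j)\<^sup>2)"
  proof (rule sum_pos2[where i=j0])
    have "b$j0 < t" using z0[of j0] j0 by (force simp: J_def)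
    then show "0 < (t - b$j0) * (z$j0)\<^sup>2" using j0 by simp
    show "0 \<le> (t - b$j) * (z$j)\<^sup>2" if "j \<in> UNIV" for j using z0[of j] by (cases "j \<in> J") (auto simp: J_def not_le)
  qed auto
  also have "(\<Sum>j\<in>UNIV. (t - b$j) * (z$j)\<^sup>2) = t * (x \<bullet> x) - (\<Sum>j\<in>UNIV. b$j * (z$j)\<^sup>2)"
  proof -
    have "(\<Sum>j\<in>UNIV. (t - b$j) * (z$j)\<^sup>2) = (\<Sum>j\<in>UNIV. t * (z$j)\<^sup>2) - (\<Sum>j\<in>UNIV. b$j * (z$j)\<^sup>2)"
      by (simp add: left_diff_distrib sum_subtractf)
    moreover have "(\<Sum>j\<in>UNIV. t * (z$j)\<^sup>2) = t * (x \<bullet> x)" by (metis sum_distrib_left zz)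
    ultimately show ?thesis by simp
  qed
  finally show False using ineq by simp
qed



lemma match_aux:
  fixes a b :: "'i \<Rightarrow> real"
  shows "\<And>A B. card A = k \<Longrightarrow> finite A \<Longrightarrow> finite B \<Longrightarrow> card B = k \<Longrightarrow>
    (\<And>t. card {i\<in>A. a i \<ge> t} \<le> card {j\<in>B. b j \<ge> t}) \<Longrightarrow>
    \<exists>\<sigma>. bij_betw \<sigma> A B \<and> (\<forall>i\<in>A. a i \<le> b (\<sigma> i))"
proof (induction k)
  case 0
  then show ?case by (auto simp: bij_betw_def)
next
  case (Suc k)
  have Ane: "A \<noteq> {}" and Bne: "B \<noteq> {}" using Suc.prems by auto
  have "Max (a ` A) \<in> a ` A" using Suc.prems(2) Ane by (intro Max_in) auto
  then obtain i0 where i0: "i0 \<in> A" "a i0 = Max (a ` A)" by (metis imageE)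
  have i0max: "a i \<le> a i0" if "i \<in> A" for i using i0(2) that Suc.prems(2) by simp
  have "Max (b ` B) \<in> b ` B" using Suc.prems(3) Bne by (intro Max_in) auto
  then obtain j0 where j0: "j0 \<in> B" "b j0 = Max (b ` B)" by (metis imageE)
  have j0max: "b j \<le> b j0" if "j \<in> B" for j using j0(2) that Suc.prems(3) by simp
  have ab: "a i0 \<le> b j0"
  proof -
    have "i0 \<in> {i\<in>A. a i \<ge> a i0}" using i0 by simp
    then have "0 < card {i\<in>A. a i \<ge> a i0}" using Suc.prems(2) by (auto simp: card_gt_0_iff)
    then have "0 < card {j\<in>B. b j \<ge> a i0}" using Suc.prems(5)[of "a i0"] by linarith
    then obtain j where "j \<in> B" "b j \<ge> a i0" by (auto simp: card_gt_0_iff)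
    then show ?thesis using j0max[of j] by linarith
  qed
  define A' where "A' = A - {i0}"
  define B' where "B' = B - {j0}"
  have cnt: "card {i\<in>A'. a i \<ge> t} \<le> card {j\<in>B'. b j \<ge> t}" for t
  proof (cases "t \<le> a i0")
    case True
    have e1: "{i\<in>A'. a i \<ge> t} = {i\<in>A. a i \<ge> t} - {i0}" unfolding A'_def by auto
    have e2: "{j\<in>B'. b j \<ge> t} = {j\<in>B. b j \<ge> t} - {j0}" unfolding B'_def by auto
    have "card {i\<in>A'. a i \<ge> t} = card {i\<in>A. a i \<ge> t} - 1"
      unfolding e1 using i0 True Suc.prems(2) by (subst card_Diff_singleton) auto
    moreover have "card {j\<in>B'. b j \<ge> t} = card {j\<in>B. b j \<ge> t} - 1"
      unfolding e2 using j0 True ab Suc.prems(3) by (subst card_Diff_singleton) auto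
    ultimately show ?thesis using Suc.prems(5)[of t] by linarith
  next
    case False
    have "{i\<in>A'. a i \<ge> t} = {}"
    proof -
      { fix i assume "i \<in> A'" "t \<le> a i"
        then have False using i0max[of i] False unfolding A'_def by auto }
      then show ?thesis by blast
    qed
    then have "card {i\<in>A'. a i \<ge> t} = 0" by (simp only: card.empty)
    then show ?thesis by linarith
  qed
  obtain \<sigma> where s: "bij_betw \<sigma> A' B'" "\<forall>i\<in>A'. a i \<le> b (\<sigma> i)"
    using Suc.IH[of A' B'] cnt Suc.prems i0 j0 unfolding A'_def B'_def by auto
  define \<tau> where "\<tau> = \<sigma>(i0 := j0)"
  have "bij_betw \<tau> A' B' = bij_betw \<sigma> A' B'" by (rule bij_betw_cong) (simp add: \<tau>_def A'_def)
  then have "bij_betw \<tau> A' B'" using s(1) by simp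
  moreover have "bij_betw \<tau> {i0} {j0}" unfolding \<tau>_def by (simp add: bij_betw_def)
  ultimately have "bij_betw \<tau> (A' \<union> {i0}) (B' \<union> {j0})"
    by (rule bij_betw_combine) (auto simp: B'_def)
  moreover have "A' \<union> {i0} = A" "B' \<union> {j0} = B" using i0 j0 unfolding A'_def B'_def by auto
  moreover have "\<forall>i\<in>A. a i \<le> b (\<tau> i)" using s(2) ab unfolding \<tau>_def A'_def by auto
  ultimately show ?case by auto
qed

lemma match_perm:
  fixes a b :: "real^'n::finite"
  assumes "\<And>t. card {i. a$i \<ge> t} \<le> card {j. b$j \<ge> t}"
  shows "\<exists>\<sigma>. \<sigma> permutes (UNIV::'n set) \<and> (\<forall>i. a$i \<le> b$(\<sigma> i))"
proof -
  obtain \<sigma> where s: "bij_betw \<sigma> (UNIV::'n set) UNIV" "\<forall>i\<in>UNIV. a$i \<le> b$(\<sigma> i)"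
    using match_aux[where k="CARD('n)" and A=UNIV and B=UNIV and a="\<lambda>i. a$i" and b="\<lambda>j. b$j"] assms by auto
  have "\<sigma> permutes UNIV" using s(1) by (intro bij_imp_permutes) auto
  then show ?thesis using s(2) by blast
qed



lemma lin_pos:
  fixes F' :: "real^'n::finite \<Rightarrow> real"
  assumes "linear F'" "\<forall>i. F' (axis i 1) > 0" "\<forall>i. v$i \<ge> 0"
  shows "F' v \<ge> 0"
proof -
  have "F' v = F' (\<Sum>i\<in>UNIV. (v$i) *\<^sub>R axis i 1)"
    using basis_expansion[of v] by (simp add: scalar_mult_eq_scaleR)
  also have "\<dots> = (\<Sum>i\<in>UNIV. v$i * F' (axis i 1))"
    by (simp add: linear_sum[OF assms(1)] linear_cmul[OF assms(1)])
  also have "\<dots> \<ge> 0" using assms(2,3) by (intro sum_nonneg) (simp add: less_imp_le)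
  finally show ?thesis .
qed

lemma F_monotone:
  fixes F :: "real^'n::finite \<Rightarrow> real"
  assumes F_mono: "\<And>l. l \<in> Gamma_plus \<Longrightarrow>
                 \<exists>F'. (F has_derivative F') (at l) \<and> (\<forall>i. F' (axis i 1) > 0)"
    and a: "a \<in> Gamma_plus" and ab: "\<forall>i. a$i \<le> b$i"
  shows "F a \<le> F b"
proof -
  define g where "g = (\<lambda>s. F (a + s *\<^sub>R (b - a)))"
  have ex: "\<exists>d. (g has_real_derivative d) (at s) \<and> d \<ge> 0" if s: "0 \<le> s" "s \<le> 1" for s
  proof -
    have "a + s *\<^sub>R (b - a) \<in> Gamma_plus"
      using a ab s unfolding Gamma_plus_def
      by (auto intro!: add_pos_nonneg mult_nonneg_nonneg)
    then obtain F' where F': "(F has_derivative F') (at (a + s *\<^sub>R (b - a)))" "\<forall>i. F' (axis i 1) > 0"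
      using F_mono by blast
    have "F' (b - a) \<ge> 0" using F' ab
      by (intro lin_pos) (auto simp: has_derivative_linear)
    then show ?thesis using dir_deriv[OF F'(1)] unfolding g_def by blast
  qed
  define D where "D = (\<lambda>s. SOME d. (g has_real_derivative d) (at s) \<and> d \<ge> 0)"
  have D: "(g has_real_derivative D s) (at s) \<and> D s \<ge> 0" if "0 \<le> s" "s \<le> 1" for s
    unfolding D_def using someI_ex[OF ex[OF that]] .
  obtain z where z: "0 < z" "z < 1" "g 1 - g 0 = (1 - 0) * D z"
    using MVT2[of 0 1 g D] D by auto
  have "D z \<ge> 0" using D[of z] z by auto
  then show ?thesis using z(3) unfolding g_def by simp
qed

lemma frame_exists:
  fixes x0 :: "real^'m::finite"
  assumes dim: "CARD('m) = CARD('n::finite) + 1" and x0: "x0 \<noteq> 0"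
  shows "\<exists>e::'n \<Rightarrow> real^'m. tangent_frame x0 e"
proof -
  obtain B where B: "B \<subseteq> {v. x0 \<bullet> v = 0}" "pairwise orthogonal B" "\<And>x. x \<in> B \<Longrightarrow> norm x = 1"
     "independent B" "card B = dim {v. x0 \<bullet> v = 0}" "span B = {v. x0 \<bullet> v = 0}"
    using orthonormal_basis_subspace[OF subspace_hyperplane[of x0]] by metis
  have fin: "finite B" using B(4) by (rule independent_imp_finite)
  have "card B = CARD('n)" using B(5) dim_hyperplane[OF x0] dim by simp
  then have "\<exists>f. bij_betw f (UNIV::'n set) B" using fin by (simp add: bij_betw_iff_card)
  then obtain e where e: "bij_betw e (UNIV::'n set) B" by blast
  have eB: "e i \<in> B" for i using e by (auto simp: bij_betw_def)
  have einj: "e i = e j \<Longrightarrow> i = j" for i j using e by (auto simp: bij_betw_def inj_on_def)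
  have "tangent_frame x0 e"
    unfolding tangent_frame_def
  proof (intro conjI allI)
    fix i j
    show "e i \<bullet> x0 = 0" using B(1) eB[of i] by (auto simp: inner_commute)
    show "e i \<bullet> e j = (if i = j then 1 else 0)"
    proof (cases "i = j")
      case True then show ?thesis using B(3)[OF eB[of i]] by (simp add: norm_eq_1)
    next
      case False
      then have "e i \<noteq> e j" using einj by blast
      then show ?thesis using B(2) eB False unfolding pairwise_def orthogonal_def by auto
    qed
  qed
  then show ?thesis by blast
qed

lemma frame_quad:
  fixes e :: "'n::finite \<Rightarrow> real^'m::finite" and H :: "real^'m^'m" and \<xi> :: "real^'n"
  assumes "\<forall>i j. e i \<bullet> e j = (if i = j then 1 else 0)"
  defines "v \<equiv> (\<Sum>i\<in>UNIV. (\<xi>$i) *\<^sub>R e i)"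
  shows "\<xi> \<bullet> ((\<chi> i j. e i \<bullet> (H *v e j) + (if i = j then c else 0)) *v \<xi>) = v \<bullet> (H *v v) + c * (\<xi> \<bullet> \<xi>)"
    and "v \<bullet> v = \<xi> \<bullet> \<xi>"
proof -
  have lin: "linear ((*v) H)" by (rule matrix_vector_mul_linear)
  have Hv: "H *v v = (\<Sum>j\<in>UNIV. \<xi>$j *\<^sub>R (H *v e j))"
    unfolding v_def by (simp add: linear_sum[OF lin] linear_cmul[OF lin])
  have "v \<bullet> (H *v v) = (\<Sum>i\<in>UNIV. \<Sum>j\<in>UNIV. \<xi>$i * \<xi>$j * (e i \<bullet> (H *v e j)))"
    unfolding Hv unfolding v_def
    apply (simp add: inner_sum_left inner_sum_right sum_distrib_left mult_ac)
    apply (subst sum.swap)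
    apply (simp add: mult_ac)
    done
  moreover have "\<xi> \<bullet> ((\<chi> i j. e i \<bullet> (H *v e j) + (if i = j then c else 0)) *v \<xi>)
      = (\<Sum>i\<in>UNIV. \<Sum>j\<in>UNIV. \<xi>$i * \<xi>$j * (e i \<bullet> (H *v e j))) + c * (\<xi> \<bullet> \<xi>)"
  proof -
    have "\<xi> \<bullet> ((\<chi> i j. e i \<bullet> (H *v e j) + (if i = j then c else 0)) *v \<xi>)
        = (\<Sum>i\<in>UNIV. \<xi>$i * (\<Sum>j\<in>UNIV. (e i \<bullet> (H *v e j) + (if i = j then c else 0)) * \<xi>$j))"
      by (simp add: inner_vec_def matrix_vector_mult_def)
    also have "\<dots> = (\<Sum>i\<in>UNIV. \<Sum>j\<in>UNIV. \<xi>$i * \<xi>$j * (e i \<bullet> (H *v e j)) + (if i = j then c * (\<xi>$i * \<xi>$j) else 0))"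
      by (intro sum.cong refl) (simp add: sum_distrib_left distrib_right distrib_left, intro sum.cong refl, simp add: mult_ac)
    also have "\<dots> = (\<Sum>i\<in>UNIV. \<Sum>j\<in>UNIV. \<xi>$i * \<xi>$j * (e i \<bullet> (H *v e j))) + (\<Sum>i\<in>UNIV. c * (\<xi>$i * \<xi>$i))"
      by (simp add: sum.distrib sum.delta)
    also have "(\<Sum>i\<in>UNIV. c * (\<xi>$i * \<xi>$i)) = c * (\<xi> \<bullet> \<xi>)"
      by (simp add: inner_vec_def sum_distrib_left)
    finally show ?thesis .
  qed
  ultimately show "\<xi> \<bullet> ((\<chi> i j. e i \<bullet> (H *v e j) + (if i = j then c else 0)) *v \<xi>) = v \<bullet> (H *v v) + c * (\<xi> \<bullet> \<xi>)"
    by simp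
  have "v \<bullet> v = (\<Sum>i\<in>UNIV. \<Sum>j\<in>UNIV. \<xi>$i * \<xi>$j * (e i \<bullet> e j))"
    unfolding v_def by (simp add: inner_sum_left inner_sum_right sum_distrib_left mult_ac inner_commute)
  also have "\<dots> = (\<Sum>i\<in>UNIV. \<Sum>j\<in>UNIV. if i = j then \<xi>$i * \<xi>$j else 0)"
    by (intro sum.cong refl) (simp add: assms(1))
  also have "\<dots> = (\<Sum>i\<in>UNIV. \<xi>$i * \<xi>$i)"
    by (intro sum.cong refl) (simp add: sum.delta')
  also have "\<dots> = \<xi> \<bullet> \<xi>" by (simp add: inner_vec_def)
  finally show "v \<bullet> v = \<xi> \<bullet> \<xi>" .
qed



lemma axis_sq_sum:
  fixes a :: "real^'n::finite"
  shows "(\<Sum>k\<in>UNIV. a$k * ((axis i 1 :: real^'n)$k)\<^sup>2) = a$i"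
proof -
  have "(\<Sum>k\<in>UNIV. a$k * ((axis i 1 :: real^'n)$k)\<^sup>2) = (\<Sum>k\<in>UNIV. if k = i then a$k else 0)"
    by (intro sum.cong refl) (simp add: axis_def)
  also have "\<dots> = a$i" by (simp add: sum.delta)
  finally show ?thesis .
qed

lemma eig_pos:
  fixes P A :: "real^'n::finite^'n"
  assumes P: "orthogonal_matrix P" "A = P ** diag_mat a ** transpose P"
    and pd: "\<And>x. x \<noteq> 0 \<Longrightarrow> x \<bullet> (A *v x) > 0"
  shows "a \<in> Gamma_plus"
  unfolding Gamma_plus_def
proof (intro CollectI allI)
  fix i
  define x where "x = P *v axis i 1"
  have PtP: "transpose P ** P = mat 1" using P(1) by (simp add: orthogonal_matrix_def)
  have tx: "transpose P *v x = axis i 1" unfolding x_def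
    by (simp only: matrix_vector_mul_assoc PtP matrix_vector_mul_lid)
  have "(\<Sum>k\<in>UNIV. ((transpose P *v x)$k)\<^sup>2) = x \<bullet> x" by (rule quad_diag(2)[OF P])
  moreover have "(\<Sum>k\<in>UNIV. ((transpose P *v x)$k)\<^sup>2) = 1"
    using axis_sq_sum[of "\<chi> k. 1" i] unfolding tx by simp
  ultimately have "x \<bullet> x = 1" by simp
  then have "x \<noteq> 0" by auto
  then have "0 < x \<bullet> (A *v x)" by (rule pd)
  also have "x \<bullet> (A *v x) = (\<Sum>k\<in>UNIV. a$k * ((transpose P *v x)$k)\<^sup>2)" by (rule quad_diag(1)[OF P])
  also have "\<dots> = a$i" unfolding tx by (rule axis_sq_sum)
  finally show "0 < a$i" .
qed

lemma hess_sym: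
  fixes f :: "real^'m::finite \<Rightarrow> real"
  assumes "open S" "x \<in> S" "\<And>y. y \<in> S \<Longrightarrow> f differentiable (at y)"
    "\<And>i. partial_d i f differentiable (at x)"
  shows "transpose (hess f x) = hess f x"
  using schwarz[OF assms(1,2,3) assms(4) assms(4)]
  by (simp add: vec_eq_iff transpose_def hess_def)

lemma W_sym:
  fixes H :: "real^'m::finite^'m" and e :: "'n::finite \<Rightarrow> real^'m"
  assumes "transpose H = H"
  shows "transpose (\<chi> i j. e i \<bullet> (H *v e j) + (if i = j then c else 0)) =
         (\<chi> i j. e i \<bullet> (H *v e j) + (if i = j then c else 0))"
proof -
  have "e j \<bullet> (H *v e i) = e i \<bullet> (H *v e j)" for i j
    using adj_mat[of H "e j" "e i"] assms by (simp add: inner_commute)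
  then show ?thesis by (simp add: vec_eq_iff transpose_def)
qed



lemma half:
  fixes \<beta> :: real
    and F :: "real^'n::finite \<Rightarrow> real"
    and G :: "real^'m::finite \<Rightarrow> real \<Rightarrow> real \<Rightarrow> real"
    and c :: real
    and u1 u2 :: "real^'m \<Rightarrow> real"
  assumes dim: "CARD('m) = CARD('n) + 1"
    and beta: "\<beta> > 0"
    and F_sym: "\<And>\<sigma> l. \<sigma> permutes (UNIV :: 'n set) \<Longrightarrow> l \<in> Gamma_plus \<Longrightarrow>
                 F (\<chi> i. l $ (\<sigma> i)) = F l"
    and F_pos: "\<And>l. l \<in> Gamma_plus \<Longrightarrow> F l > 0"
    and F_hom: "\<And>t l. t > 0 \<Longrightarrow> l \<in> Gamma_plus \<Longrightarrow> F (t *\<^sub>R l) = t * F l"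
    and F_mono: "\<And>l. l \<in> Gamma_plus \<Longrightarrow>
                 \<exists>F'. (F has_derivative F') (at l) \<and> (\<forall>i. F' (axis i 1) > 0)"
    and G_pos: "\<And>x s1 s2. x \<in> unit_sphere \<Longrightarrow> s1 > 0 \<Longrightarrow> s2 > 0 \<Longrightarrow> G x s1 s2 > 0"
    and G_cond: "\<And>x s1 s2 m. x \<in> unit_sphere \<Longrightarrow> s1 > 0 \<Longrightarrow> s2 > 0 \<Longrightarrow> m > 0 \<Longrightarrow>
                 G x (m * s1) (m * s2) \<ge> G x s1 s2 * m powr (- \<beta>) \<Longrightarrow> m \<le> 1"
    and sol1: "smooth_on (- {0}) (hom0_ext u1)" "\<forall>x\<in>unit_sphere. u1 x > 0" "uniformly_convex u1"
              "\<forall>x\<in>unit_sphere. \<forall>e::'n \<Rightarrow> real^'m. tangent_frame x e \<longrightarrow>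
                 G x (u1 x) (sqrt ((u1 x)\<^sup>2 + (norm (sph_grad u1 x))\<^sup>2))
                   * apply_eig F (W_matrix u1 x e) powr \<beta> = c"
    and sol2: "smooth_on (- {0}) (hom0_ext u2)" "\<forall>x\<in>unit_sphere. u2 x > 0" "uniformly_convex u2"
              "\<forall>x\<in>unit_sphere. \<forall>e::'n \<Rightarrow> real^'m. tangent_frame x e \<longrightarrow>
                 G x (u2 x) (sqrt ((u2 x)\<^sup>2 + (norm (sph_grad u2 x))\<^sup>2))
                   * apply_eig F (W_matrix u2 x e) powr \<beta> = c"
  shows "\<forall>x\<in>unit_sphere. u1 x \<le> u2 x"
proof -
  define f1 where "f1 = hom0_ext u1"
  define f2 where "f2 = hom0_ext u2"
  define S :: "(real^'m) set" where "S = - {0}"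
  have oS: "open S" unfolding S_def by (simp add: open_Compl)
  have d1: "f1 differentiable (at y)" if "y \<in> S" for y
    using smooth_diff(1)[OF sol1(1)[folded S_def] oS that] unfolding f1_def .
  have d2: "f2 differentiable (at y)" if "y \<in> S" for y
    using smooth_diff(1)[OF sol2(1)[folded S_def] oS that] unfolding f2_def .
  have p1: "partial_d i f1 differentiable (at y)" if "y \<in> S" for y i
    using smooth_diff(2)[OF sol1(1)[folded S_def] oS that] unfolding f1_def .
  have p2: "partial_d i f2 differentiable (at y)" if "y \<in> S" for y i
    using smooth_diff(2)[OF sol2(1)[folded S_def] oS that] unfolding f2_def .
  have nsph: "norm x = 1" if "x \<in> unit_sphere" for x :: "real^'m" using that by simp
  have sphS: "x \<in> S" if "x \<in> unit_sphere" for x :: "real^'m" using nsph[OF that] unfolding S_def by auto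
  have ext: "hom0_ext u x = u x" if "x \<in> unit_sphere" for x :: "real^'m" and u :: "real^'m \<Rightarrow> real"
    using nsph[OF that] by (simp add: hom0_ext_def)
  have cf1: "continuous_on unit_sphere f1"
    by (rule continuous_on_subset[of S]) (auto intro!: differentiable_imp_continuous_on
        differentiable_at_imp_differentiable_on d1 sphS)
  have cf2: "continuous_on unit_sphere f2"
    by (rule continuous_on_subset[of S]) (auto intro!: differentiable_imp_continuous_on
        differentiable_at_imp_differentiable_on d2 sphS)
  have f2pos: "f2 x > 0" if "x \<in> unit_sphere" for x :: "real^'m" using sol2(2) that ext[OF that] unfolding f2_def by auto
  have cr: "continuous_on unit_sphere (\<lambda>x. f1 x / f2 x)"
    using f2pos by (intro continuous_on_divide cf1 cf2) (metis less_irrefl)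
  have ne: "(unit_sphere :: (real^'m) set) \<noteq> {}"
  proof -
    have "axis undefined 1 \<in> (unit_sphere :: (real^'m) set)" by simp
    then show ?thesis by blast
  qed
  obtain x0 where x0: "x0 \<in> unit_sphere" "\<forall>y\<in>unit_sphere. f1 y / f2 y \<le> f1 x0 / f2 x0"
    using continuous_attains_sup[OF compact_sphere ne cr] by blast
  have x0S: "x0 \<in> S" by (rule sphS[OF x0(1)])
  have u1p: "u1 x0 > 0" and u2p: "u2 x0 > 0" using sol1(2) sol2(2) x0(1) by auto
  define M where "M = u1 x0 / u2 x0"
  have Mpos: "M > 0" unfolding M_def using u1p u2p by simp
  have u1M: "u1 x0 = M * u2 x0" unfolding M_def using u2p by simp
  have ratio: "u1 x / u2 x \<le> M" if "x \<in> unit_sphere" for x :: "real^'m"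
  proof -
    have "f1 x / f2 x \<le> f1 x0 / f2 x0" using x0(2) that by blast
    then show ?thesis using ext[OF that] ext[OF x0(1)] unfolding f1_def f2_def M_def by simp
  qed
  have le: "f1 y \<le> M * f2 y" if "y \<in> S" for y
  proof -
    define z where "z = y /\<^sub>R norm y"
    have "y \<noteq> 0" using that unfolding S_def by auto
    then have zs: "z \<in> unit_sphere" unfolding z_def by simp
    have "u2 z > 0" using sol2(2) zs by auto
    then have "u1 z \<le> M * u2 z" using ratio[OF zs] by (simp add: divide_le_eq)
    then show ?thesis unfolding f1_def f2_def hom0_ext_def z_def[symmetric] .
  qed
  have eq: "f1 x0 = M * f2 x0" using ext[OF x0(1)] u1M unfolding f1_def f2_def by simp
  have gradeq: "grad f1 x0 = M *\<^sub>R grad f2 x0"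
    using second_order_max(1)[OF oS x0S d1 d2 p1[OF x0S] p2[OF x0S] le eq] by blast
  have hessle: "v \<bullet> (hess f1 x0 *v v) \<le> M * (v \<bullet> (hess f2 x0 *v v))" for v
    using second_order_max(2)[OF oS x0S d1 d2 p1[OF x0S] p2[OF x0S] le eq] by blast
  have x0nz: "x0 \<noteq> 0" using x0S unfolding S_def by auto
  obtain e :: "'n \<Rightarrow> real^'m" where e: "tangent_frame x0 e" using frame_exists[OF dim x0nz] by blast
  have eorth: "\<forall>i j. e i \<bullet> e j = (if i = j then 1 else 0)" and etan: "\<forall>i. e i \<bullet> x0 = 0"
    using e unfolding tangent_frame_def by auto
  define H1 where "H1 = hess f1 x0"
  define H2 where "H2 = hess f2 x0"
  define W1 where "W1 = W_matrix u1 x0 e"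
  define W2 where "W2 = W_matrix u2 x0 e"
  have W1e: "W1 = (\<chi> i j. e i \<bullet> (H1 *v e j) + (if i = j then u1 x0 else 0))"
    unfolding W1_def W_matrix_def sph_hess_def H1_def f1_def ..
  have W2e: "W2 = (\<chi> i j. e i \<bullet> (H2 *v e j) + (if i = j then u2 x0 else 0))"
    unfolding W2_def W_matrix_def sph_hess_def H2_def f2_def ..
  have H1s: "transpose H1 = H1" unfolding H1_def using hess_sym[OF oS x0S d1 p1[OF x0S]] .
  have H2s: "transpose H2 = H2" unfolding H2_def using hess_sym[OF oS x0S d2 p2[OF x0S]] .
  have W1s: "transpose W1 = W1" unfolding W1e by (rule W_sym[OF H1s])
  have W2s: "transpose W2 = W2" unfolding W2e by (rule W_sym[OF H2s])
  define vv where "vv = (\<lambda>\<xi>::real^'n. \<Sum>i\<in>UNIV. (\<xi>$i) *\<^sub>R e i)"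
  have q1: "\<xi> \<bullet> (W1 *v \<xi>) = vv \<xi> \<bullet> (H1 *v vv \<xi>) + u1 x0 * (\<xi> \<bullet> \<xi>)" for \<xi>
    unfolding W1e vv_def by (rule frame_quad(1)[OF eorth])
  have q2: "\<xi> \<bullet> (W2 *v \<xi>) = vv \<xi> \<bullet> (H2 *v vv \<xi>) + u2 x0 * (\<xi> \<bullet> \<xi>)" for \<xi>
    unfolding W2e vv_def by (rule frame_quad(1)[OF eorth])
  have vvn: "vv \<xi> \<bullet> vv \<xi> = \<xi> \<bullet> \<xi>" for \<xi> unfolding vv_def by (rule frame_quad(2)[OF eorth])
  have vvt: "vv \<xi> \<bullet> x0 = 0" for \<xi> unfolding vv_def using etan by (simp add: inner_sum_left)
  have loewner: "\<xi> \<bullet> (W1 *v \<xi>) \<le> M * (\<xi> \<bullet> (W2 *v \<xi>))" for \<xi>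
  proof -
    have "vv \<xi> \<bullet> (H1 *v vv \<xi>) \<le> M * (vv \<xi> \<bullet> (H2 *v vv \<xi>))" using hessle unfolding H1_def H2_def .
    then show ?thesis unfolding q1 q2 u1M by (simp add: algebra_simps)
  qed
  have pd: "\<xi> \<bullet> (W *v \<xi>) > 0"
    if "\<xi> \<noteq> 0" "uniformly_convex u" "W = (\<chi> i j. e i \<bullet> (hess (hom0_ext u) x0 *v e j) + (if i = j then u x0 else 0))"
    for \<xi> u W
  proof -
    have "vv \<xi> \<bullet> vv \<xi> \<noteq> 0" using vvn[of \<xi>] that(1) by simp
    then have "vv \<xi> \<noteq> 0" by auto
    then have "sph_hess u x0 (vv \<xi>) (vv \<xi>) + u x0 * (vv \<xi> \<bullet> vv \<xi>) > 0"
      using that(2) x0(1) vvt[of \<xi>] unfolding uniformly_convex_def by blast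
    moreover have "\<xi> \<bullet> (W *v \<xi>) = sph_hess u x0 (vv \<xi>) (vv \<xi>) + u x0 * (vv \<xi> \<bullet> vv \<xi>)"
      unfolding that(3) vv_def sph_hess_def frame_quad(1)[OF eorth] frame_quad(2)[OF eorth] ..
    ultimately show ?thesis by simp
  qed
  have pd1: "\<xi> \<bullet> (W1 *v \<xi>) > 0" if "\<xi> \<noteq> 0" for \<xi>
    by (rule pd[OF that sol1(3)]) (simp add: W1e H1_def f1_def)
  have pd2: "\<xi> \<bullet> (W2 *v \<xi>) > 0" if "\<xi> \<noteq> 0" for \<xi>
    by (rule pd[OF that sol2(3)]) (simp add: W2e H2_def f2_def)
  define a where "a = (SOME l. eigvals W1 l)"
  define b where "b = (SOME l. eigvals W2 l)"
  have ea: "eigvals W1 a" unfolding a_def using spectral[OF W1s] by (rule someI_ex)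
  have eb: "eigvals W2 b" unfolding b_def using spectral[OF W2s] by (rule someI_ex)
  obtain P where P: "orthogonal_matrix P" "W1 = P ** diag_mat a ** transpose P" using ea unfolding eigvals_def by blast
  obtain Q where Q: "orthogonal_matrix Q" "W2 = Q ** diag_mat b ** transpose Q" using eb unfolding eigvals_def by blast
  have aG: "a \<in> Gamma_plus" by (rule eig_pos[OF P pd1])
  have bG: "b \<in> Gamma_plus" by (rule eig_pos[OF Q pd2])
  define Mb where "Mb = M *\<^sub>R b"
  have MbG: "Mb \<in> Gamma_plus" using bG Mpos unfolding Mb_def Gamma_plus_def by simp
  define B' where "B' = Q ** diag_mat Mb ** transpose Q"
  have B'q: "x \<bullet> (B' *v x) = M * (x \<bullet> (W2 *v x))" for x
  proof -
    have "x \<bullet> (B' *v x) = (\<Sum>i\<in>UNIV. Mb$i * ((transpose Q *v x)$i)\<^sup>2)"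
      by (rule quad_diag(1)[OF Q(1) B'_def])
    also have "\<dots> = M * (\<Sum>i\<in>UNIV. b$i * ((transpose Q *v x)$i)\<^sup>2)"
      by (simp add: Mb_def sum_distrib_left mult.assoc)
    also have "(\<Sum>i\<in>UNIV. b$i * ((transpose Q *v x)$i)\<^sup>2) = x \<bullet> (W2 *v x)"
      by (rule quad_diag(1)[OF Q, symmetric])
    finally show ?thesis .
  qed
  have cnt: "card {i. a$i \<ge> t} \<le> card {j. Mb$j \<ge> t}" for t
    by (rule weyl_count[OF P Q(1) B'_def]) (simp add: B'q loewner)
  obtain \<sigma> where \<sigma>: "\<sigma> permutes (UNIV::'n set)" "\<forall>i. a$i \<le> Mb$(\<sigma> i)"
    using match_perm[OF cnt] by blast
  have "F a \<le> F (\<chi> i. Mb$(\<sigma> i))" by (rule F_monotone[OF F_mono aG]) (use \<sigma>(2) in auto)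
  also have "\<dots> = F Mb" by (rule F_sym[OF \<sigma>(1) MbG])
  also have "\<dots> = M * F b" unfolding Mb_def by (rule F_hom[OF Mpos bG])
  finally have FaFb: "F a \<le> M * F b" .
  have Fa: "F a > 0" using F_pos[OF aG] .
  have Fb: "F b > 0" using F_pos[OF bG] .
  have appa: "apply_eig F W1 = F a" unfolding apply_eig_def a_def ..
  have appb: "apply_eig F W2 = F b" unfolding apply_eig_def b_def ..
  define \<rho>2 where "\<rho>2 = sqrt ((u2 x0)\<^sup>2 + (norm (sph_grad u2 x0))\<^sup>2)"
  have gr: "norm (sph_grad u1 x0) = M * norm (sph_grad u2 x0)"
    unfolding sph_grad_def f1_def[symmetric] f2_def[symmetric] gradeq using Mpos by simp
  have rho1: "sqrt ((u1 x0)\<^sup>2 + (norm (sph_grad u1 x0))\<^sup>2) = M * \<rho>2"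
  proof -
    have "(u1 x0)\<^sup>2 + (norm (sph_grad u1 x0))\<^sup>2 = M\<^sup>2 * ((u2 x0)\<^sup>2 + (norm (sph_grad u2 x0))\<^sup>2)"
      unfolding u1M gr by (simp add: power_mult_distrib algebra_simps)
    then show ?thesis unfolding \<rho>2_def using Mpos by (simp add: real_sqrt_mult)
  qed
  have rho2p: "\<rho>2 > 0" unfolding \<rho>2_def using u2p by (intro real_sqrt_gt_zero add_pos_nonneg) auto
  define A1 where "A1 = G x0 (M * u2 x0) (M * \<rho>2)"
  define A2 where "A2 = G x0 (u2 x0) \<rho>2"
  have E1: "A1 * F a powr \<beta> = c"
    using sol1(4) x0(1) e unfolding A1_def appa[symmetric] W1_def rho1[symmetric] u1M[symmetric] by blast
  have E2: "A2 * F b powr \<beta> = c"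
    using sol2(4) x0(1) e unfolding A2_def appb[symmetric] W2_def \<rho>2_def by blast
  have A1p: "A1 > 0" unfolding A1_def using G_pos[OF x0(1)] Mpos u2p rho2p by simp
  have "F a powr \<beta> \<le> (M * F b) powr \<beta>" using FaFb Fa beta by (intro powr_mono2) auto
  also have "\<dots> = M powr \<beta> * F b powr \<beta>" using Mpos Fb by (simp add: powr_mult)
  finally have "A1 * F a powr \<beta> \<le> A1 * (M powr \<beta> * F b powr \<beta>)" using A1p by (simp add: mult_left_mono)
  then have "A2 * F b powr \<beta> \<le> (A1 * M powr \<beta>) * F b powr \<beta>" using E1 E2 by (simp add: mult_ac)
  then have "A2 \<le> A1 * M powr \<beta>" using Fb by (simp add: mult_le_cancel_right)
  then have "A2 * M powr (- \<beta>) \<le> A1" using Mpos by (simp add: powr_minus divide_le_eq field_simps)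
  then have "M \<le> 1" using G_cond[OF x0(1) u2p rho2p Mpos] unfolding A1_def A2_def by blast
  then show ?thesis
  proof (intro ballI)
    fix x :: "real^'m" assume xs: "x \<in> unit_sphere" and "M \<le> 1"
    have "u1 x / u2 x \<le> 1" using ratio[OF xs] \<open>M \<le> 1\<close> by simp
    moreover have "u2 x > 0" using sol2(2) xs by auto
    ultimately show "u1 x \<le> u2 x" by (simp add: divide_le_eq)
  qed
qed

theorem theorem5p2:
  fixes \<beta> :: real
    and F :: "real^'n::finite \<Rightarrow> real"
    and G :: "real^'m::finite \<Rightarrow> real \<Rightarrow> real \<Rightarrow> real"
    and c :: real
    and u1 u2 :: "real^'m \<Rightarrow> real"
  assumes dim: "CARD('m) = CARD('n) + 1"
    and beta: "\<beta> > 0"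
    and F_sym: "\<And>\<sigma> l. \<sigma> permutes (UNIV :: 'n set) \<Longrightarrow> l \<in> Gamma_plus \<Longrightarrow>
                 F (\<chi> i. l $ (\<sigma> i)) = F l"
    and F_pos: "\<And>l. l \<in> Gamma_plus \<Longrightarrow> F l > 0"
    and F_hom: "\<And>t l. t > 0 \<Longrightarrow> l \<in> Gamma_plus \<Longrightarrow> F (t *\<^sub>R l) = t * F l"
    and F_norm: "F (\<chi> i. 1) powr \<beta> = 1"
    and F_mono: "\<And>l. l \<in> Gamma_plus \<Longrightarrow>
                 \<exists>F'. (F has_derivative F') (at l) \<and> (\<forall>i. F' (axis i 1) > 0)"
    and G_pos: "\<And>x s1 s2. x \<in> unit_sphere \<Longrightarrow> s1 > 0 \<Longrightarrow> s2 > 0 \<Longrightarrow> G x s1 s2 > 0"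
    and G_cond: "\<And>x s1 s2 m. x \<in> unit_sphere \<Longrightarrow> s1 > 0 \<Longrightarrow> s2 > 0 \<Longrightarrow> m > 0 \<Longrightarrow>
                 G x (m * s1) (m * s2) \<ge> G x s1 s2 * m powr (- \<beta>) \<Longrightarrow> m \<le> 1"
    and sol1: "smooth_on (- {0}) (hom0_ext u1)" "\<forall>x\<in>unit_sphere. u1 x > 0" "uniformly_convex u1"
              "\<forall>x\<in>unit_sphere. \<forall>e::'n \<Rightarrow> real^'m. tangent_frame x e \<longrightarrow>
                 G x (u1 x) (sqrt ((u1 x)\<^sup>2 + (norm (sph_grad u1 x))\<^sup>2))
                   * apply_eig F (W_matrix u1 x e) powr \<beta> = c"
    and sol2: "smooth_on (- {0}) (hom0_ext u2)" "\<forall>x\<in>unit_sphere. u2 x > 0" "uniformly_convex u2"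
              "\<forall>x\<in>unit_sphere. \<forall>e::'n \<Rightarrow> real^'m. tangent_frame x e \<longrightarrow>
                 G x (u2 x) (sqrt ((u2 x)\<^sup>2 + (norm (sph_grad u2 x))\<^sup>2))
                   * apply_eig F (W_matrix u2 x e) powr \<beta> = c"
  shows "\<forall>x\<in>unit_sphere. u1 x = u2 x"
  proof -
  have a: "\<forall>x\<in>unit_sphere. u1 x \<le> u2 x"
    by (rule half[OF dim beta F_sym F_pos F_hom F_mono G_pos G_cond sol1 sol2])
  have b: "\<forall>x\<in>unit_sphere. u2 x \<le> u1 x"
    by (rule half[OF dim beta F_sym F_pos F_hom F_mono G_pos G_cond sol2 sol1])
  show ?thesis using a b by (blast intro: antisym)
qed

end
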